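(* Let $\mathcal{C}$ be an $[n,k]_q$ MWS code with $k\ge 2$. Then $$n\ge\left\lceil\frac{q\,\theta_q(k-1)}{2}\right\rceil=\left\lceil\frac{q^{k+1}-q}{2(q-1)}\right\rceil=\left\lceil\tfrac12\left(q^k+q^{k-1}+\dots+q\right)\right\rceil.$$
   Context: An $[n,k]_q$ code is a $k$-dimensional subspace of $\mathbb{F}_q^n$, non-degenerate (no coordinate identically zero on the code). $\theta_q(k-1)=\frac{q^k-1}{q-1}$. The code is MWS if the set of its non-zero Hamming weights has cardinality $\theta_q(k-1)$. *)

theory Defs
  imports "HOL-Analysis.Analysis"
begin

text \<open>Codes of length n over the finite field 'a (q = CARD('a)) are subsets of
  'a ^ 'n, where the coordinate index type 'n has n = CARD('n) elements.\<close>

definition theta :: "nat \<Rightarrow> nat \<Rightarrow> nat" where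
  "theta q m = (q ^ (m + 1) - 1) div (q - 1)"

definition hamming_wt :: "'a::zero ^ 'n \<Rightarrow> nat" where
  "hamming_wt x = card {i. x $ i \<noteq> 0}"

definition linear_code :: "('a::field ^ 'n) set \<Rightarrow> nat \<Rightarrow> bool" where
  "linear_code C k \<longleftrightarrow> vec.subspace C \<and> vec.dim C = k"

definition nondegenerate :: "('a::zero ^ 'n) set \<Rightarrow> bool" where
  "nondegenerate C \<longleftrightarrow> (\<forall>i. \<exists>x\<in>C. x $ i \<noteq> 0)"

definition MWS :: "('a::{field,finite} ^ 'n) set \<Rightarrow> nat \<Rightarrow> bool" where
  "MWS C k \<longleftrightarrow> card {hamming_wt x | x. x \<in> C \<and> x \<noteq> 0} = theta CARD('a) (k - 1)"

end

theory Submission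
  imports Defs
begin

lemma card_span_indep:
  fixes B :: "('a::{field,finite}^'n) set"
  assumes "vec.independent B"
  shows "card (vec.span B) = CARD('a) ^ card B"
proof -
  have "finite B" by simp
  then show ?thesis using assms
  proof (induction B rule: finite_induct)
    case empty
    then show ?case by simp
  next
    case (insert b B)
    have indB: "vec.independent B" and nb: "b \<notin> vec.span B"
      using insert.prems insert.hyps(2) vec.independent_insert[of b B] by auto
    have bij: "bij_betw (\<lambda>(x,c). x + c *s b) (vec.span B \<times> (UNIV::'a set)) (vec.span (insert b B))"
    proof (rule bij_betwI')
      fix p1 p2 assume p1: "p1 \<in> vec.span B \<times> (UNIV::'a set)" and p2: "p2 \<in> vec.span B \<times> (UNIV::'a set)"
      obtain x c y d where e: "p1 = (x,c)" "p2 = (y,d)" by (cases p1, cases p2)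
      have xy: "x \<in> vec.span B" "y \<in> vec.span B" using p1 p2 e by auto
      show "((case p1 of (x, c) \<Rightarrow> x + c *s b) = (case p2 of (x, c) \<Rightarrow> x + c *s b)) = (p1 = p2)"
      proof
        assume h: "(case p1 of (x, c) \<Rightarrow> x + c *s b) = (case p2 of (x, c) \<Rightarrow> x + c *s b)"
        then have h2: "x + c *s b = y + d *s b" using e by simp
        have "c = d"
        proof (rule ccontr)
          assume "c \<noteq> d"
          have "(c - d) *s b = y - x" using h2
            by (simp add: vec.scale_left_diff_distrib algebra_simps)
          then have "b = inverse (c - d) *s (y - x)" using \<open>c \<noteq> d\<close>
            by (metis right_minus_eq vec.scale_left_imp_eq vec.scale_scale field_class.field_inverse vec.scale_one)
          then have "b \<in> vec.span B" using xy by (simp add: vec.span_diff vec.span_scale)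
          then show False using nb by simp
        qed
        then show "p1 = p2" using h2 e by simp
      qed simp
    next
      fix p assume "p \<in> vec.span B \<times> (UNIV::'a set)"
      then show "(case p of (x, c) \<Rightarrow> x + c *s b) \<in> vec.span (insert b B)"
        by (auto simp: vec.span_insert intro!: exI[of _ "snd p"])
    next
      fix z assume "z \<in> vec.span (insert b B)"
      then obtain c where "z - c *s b \<in> vec.span B" by (auto simp: vec.span_insert)
      then show "\<exists>p\<in>vec.span B \<times> (UNIV::'a set). z = (case p of (x, c) \<Rightarrow> x + c *s b)"
        by (intro bexI[of _ "(z - c *s b, c)"]) auto
    qed
    have "card (vec.span (insert b B)) = card (vec.span B \<times> (UNIV::'a set))"
      using bij_betw_same_card[OF bij] by simp
    also have "\<dots> = CARD('a) ^ card B * CARD('a)" using insert.IH[OF indB] by (simp add: card_cartesian_product)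
    finally show ?case using insert.hyps by simp
  qed
qed


lemma card_code:
  fixes C :: "('a::{field,finite}^'n) set"
  assumes "linear_code C k"
  shows "card C = CARD('a) ^ k"
proof -
  have sub: "vec.subspace C" and d: "vec.dim C = k" using assms by (auto simp: linear_code_def)
  obtain B where B: "B \<subseteq> C" "vec.independent B" "C \<subseteq> vec.span B" "card B = vec.dim C"
    by (rule vec.basis_exists)
  have "vec.span B = C" using vec.span_subspace[OF B(1) B(3) sub] .
  then show ?thesis using card_span_indep[OF B(2)] B(4) d by simp
qed

lemma card_hyper:
  fixes C :: "('a::{field,finite}^'n) set"
  assumes sub: "vec.subspace C" and e: "e \<in> C" "e $ i \<noteq> 0"
  shows "card C = card {x\<in>C. x $ i = 0} * CARD('a)"
proof -
  define f where "f = inverse (e $ i) *s e"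
  have fC: "f \<in> C" using sub e by (simp add: f_def vec.subspace_scale)
  have fi: "f $ i = 1" using e by (simp add: f_def)
  have bij: "bij_betw (\<lambda>(x,c). x + c *s f) ({x\<in>C. x $ i = 0} \<times> (UNIV::'a set)) C"
  proof (rule bij_betwI')
    fix p1 p2 assume p1: "p1 \<in> {x\<in>C. x $ i = 0} \<times> (UNIV::'a set)" and p2: "p2 \<in> {x\<in>C. x $ i = 0} \<times> (UNIV::'a set)"
    obtain x c y d where ee: "p1 = (x,c)" "p2 = (y,d)" by (cases p1, cases p2)
    have xy: "x $ i = 0" "y $ i = 0" using p1 p2 ee by auto
    show "((case p1 of (x, c) \<Rightarrow> x + c *s f) = (case p2 of (x, c) \<Rightarrow> x + c *s f)) = (p1 = p2)"
    proof
      assume h: "(case p1 of (x, c) \<Rightarrow> x + c *s f) = (case p2 of (x, c) \<Rightarrow> x + c *s f)"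
      then have h2: "x + c *s f = y + d *s f" using ee by simp
      then have "(x + c *s f) $ i = (y + d *s f) $ i" by simp
      then have "c = d" using xy fi by simp
      then show "p1 = p2" using h2 ee by simp
    qed simp
  next
    fix p assume "p \<in> {x\<in>C. x $ i = 0} \<times> (UNIV::'a set)"
    then show "(case p of (x, c) \<Rightarrow> x + c *s f) \<in> C"
      using sub fC by (auto simp: vec.subspace_add vec.subspace_scale)
  next
    fix z assume z: "z \<in> C"
    have "z - (z $ i) *s f \<in> C" using sub fC z by (simp add: vec.subspace_diff vec.subspace_scale)
    moreover have "(z - (z $ i) *s f) $ i = 0" using fi by simp
    ultimately show "\<exists>p\<in>{x\<in>C. x $ i = 0} \<times> (UNIV::'a set). z = (case p of (x, c) \<Rightarrow> x + c *s f)"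
      by (intro bexI[of _ "(z - (z $ i) *s f, z $ i)"]) auto
  qed
  show ?thesis using bij_betw_same_card[OF bij] by (simp add: card_cartesian_product)
qed

lemma sum_distinct_nat:
  fixes S :: "nat set"
  assumes "finite S"
  shows "card S * (card S - 1) \<le> 2 * \<Sum> S"
  using assms
proof (induction "card S" arbitrary: S)
  case 0
  then show ?case by simp
next
  case (Suc c)
  then have ne: "S \<noteq> {}" by auto
  define m where "m = Max S"
  have mS: "m \<in> S" using Suc.prems ne by (simp add: m_def)
  have "S \<subseteq> {..m}" using Suc.prems by (auto simp: m_def)
  then have "card S \<le> Suc m" using card_mono[of "{..m}" S] by simp
  have cS': "card (S - {m}) = c" using Suc.hyps(2) mS Suc.prems by simp
  have IH: "c * (c - 1) \<le> 2 * \<Sum> (S - {m})" using Suc.hyps(1)[of "S - {m}"] cS' Suc.prems by simp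
  have "\<Sum> S = m + \<Sum> (S - {m})" using Suc.prems mS by (simp add: sum.remove)
  moreover have "c \<le> m" using \<open>card S \<le> Suc m\<close> Suc.hyps(2) by simp
  ultimately show ?case using IH Suc.hyps(2)[symmetric]
    by (cases c) (auto simp: algebra_simps)
qed

lemma geom_nat:
  fixes q :: nat
  assumes "q \<ge> 1"
  shows "(q - 1) * (\<Sum>i<j. q ^ i) = q ^ j - 1"
proof (induction j)
  case 0 then show ?case by simp
next
  case (Suc j)
  have "q ^ j \<ge> 1" using assms by simp
  have "(q - 1) * (\<Sum>i<Suc j. q ^ i) = (q - 1) * (\<Sum>i<j. q ^ i) + (q - 1) * q ^ j" by (simp add: algebra_simps)
  also have "\<dots> = q ^ j - 1 + (q * q ^ j - q ^ j)" using Suc by (simp add: diff_mult_distrib)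
  also have "\<dots> = q * q ^ j - 1" using \<open>q ^ j \<ge> 1\<close> assms
    by (metis Nat.add_diff_assoc2 add_diff_cancel_left' le_add_diff_inverse mult_le_mono1 mult_1 nat_mult_1)
  finally show ?case by simp
qed

lemma theta_sum:
  assumes "q \<ge> 2"
  shows "theta q m = (\<Sum>i<Suc m. q ^ i)"
  using geom_nat[of q "Suc m"] assms unfolding theta_def
  by (metis add.commute nonzero_mult_div_cancel_left one_le_numeral order_trans plus_1_eq_Suc zero_less_diff
     less_le_trans one_less_numeral_iff semiring_norm(76) not_one_le_zero le_neq_implies_less gr_implies_not0 diff_is_0_eq)


lemma card_filter_sum: "finite A \<Longrightarrow> card {x\<in>A. P x} = (\<Sum>x\<in>A. if P x then 1 else (0::nat))"
  by (simp add: sum.If_cases Int_def)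

lemma wt_scale: "c \<noteq> 0 \<Longrightarrow> hamming_wt (c *s (x::'a::field^'n)) = hamming_wt x"
  by (simp add: hamming_wt_def)

lemma wt_sum: "hamming_wt (x::'a::zero^'n) = (\<Sum>i\<in>UNIV. if x $ i \<noteq> 0 then 1 else 0)"
  unfolding hamming_wt_def using card_filter_sum[of UNIV "\<lambda>i. x $ i \<noteq> 0"] by simp

theorem mainTheorem10:
  fixes C :: "('a::{field,finite} ^ 'n) set" and k :: nat
  assumes "linear_code C k" and "nondegenerate C" and "MWS C k" and "k \<ge> 2"
  shows "real CARD('n) \<ge> of_int \<lceil>real CARD('a) * real (theta CARD('a) (k - 1)) / 2\<rceil>"
proof -
  define q where "q = CARD('a)"
  define n where "n = CARD('n)"
  have "card {0::'a, 1} \<le> q" unfolding q_def by (rule card_mono) auto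
  then have q2: "q \<ge> 2" by simp
  obtain m where km: "k = Suc (Suc m)" using assms(4) by (metis add_2_eq_Suc le_Suc_ex)
  define t where "t = (\<Sum>i<Suc (Suc m). q ^ i)"
  define s where "s = (\<Sum>i<Suc m. q ^ i)"
  have tth: "theta q (k - 1) = t" using theta_sum[OF q2] km by (simp add: t_def)
  have ts1: "t = s + q ^ Suc m" by (simp add: t_def s_def)
  have ts2: "t = 1 + q * s" unfolding t_def s_def
    by (simp only: sum.lessThan_Suc_shift) (simp add: sum_distrib_left)
  have "q ^ 0 \<le> s" unfolding s_def by (rule member_le_sum) auto
  then have s1: "s \<ge> 1" by simp
  have geo: "(q - 1) * t = q ^ k - 1" using geom_nat[of q "Suc (Suc m)"] q2 km by (simp add: t_def)
  have sub: "vec.subspace C" using assms(1) by (simp add: linear_code_def)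
  have NC: "card C = q ^ k" using card_code[OF assms(1)] by (simp add: q_def)
  have zC: "0 \<in> C" using sub by (simp add: vec.subspace_0)
  have qpos: "q ^ Suc m > 0" using q2 by simp
  have coord: "card {x\<in>C. x $ i \<noteq> 0} = q ^ Suc m * (q - 1)" for i
  proof -
    obtain e where e: "e \<in> C" "e $ i \<noteq> 0" using assms(2) by (auto simp: nondegenerate_def)
    have h: "card C = card {x\<in>C. x $ i = 0} * q" using card_hyper[OF sub e] by (simp add: q_def)
    then have M: "card {x\<in>C. x $ i = 0} = q ^ Suc m" using NC km q2 by (simp add: mult.commute)
    have "{x\<in>C. x $ i \<noteq> 0} = C - {x\<in>C. x $ i = 0}" by auto
    then have "card {x\<in>C. x $ i \<noteq> 0} = card C - card {x\<in>C. x $ i = 0}"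
      by (simp add: card_Diff_subset)
    then show ?thesis using M NC km by (simp add: diff_mult_distrib2 algebra_simps)
  qed
  have sumC: "(\<Sum>x\<in>C. hamming_wt x) = n * (q ^ Suc m * (q - 1))"
  proof -
    have "(\<Sum>x\<in>C. hamming_wt x) = (\<Sum>x\<in>C. \<Sum>i\<in>UNIV. if x $ i \<noteq> 0 then 1 else (0::nat))"
      by (intro sum.cong refl) (simp add: wt_sum)
    also have "\<dots> = (\<Sum>i\<in>UNIV. \<Sum>x\<in>C. if x $ i \<noteq> 0 then 1 else (0::nat))" by (rule sum.swap)
    also have "\<dots> = (\<Sum>i\<in>(UNIV::'n set). card {x\<in>C. x $ i \<noteq> 0})"
      by (simp add: card_filter_sum)
    also have "\<dots> = n * (q ^ Suc m * (q - 1))" using coord by (simp add: n_def)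
    finally show ?thesis .
  qed
  define C' where "C' = C - {0}"
  have sumC': "(\<Sum>x\<in>C'. hamming_wt x) = n * (q ^ Suc m * (q - 1))"
  proof -
    have "(\<Sum>x\<in>C. hamming_wt x) = hamming_wt (0::'a^'n) + (\<Sum>x\<in>C'. hamming_wt x)"
      unfolding C'_def using zC by (simp add: sum.remove)
    then show ?thesis using sumC by (simp add: hamming_wt_def)
  qed
  define W where "W = hamming_wt ` C'"
  have "{hamming_wt x | x. x \<in> C \<and> x \<noteq> 0} = W" by (auto simp: W_def C'_def)
  then have cW: "card W = t" using assms(3) tth by (simp add: MWS_def q_def)
  define c where "c w = card {x\<in>C'. hamming_wt x = w}" for w
  have s_part: "(\<Sum>x\<in>C'. hamming_wt x) = (\<Sum>w\<in>W. w * c w)"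
    unfolding W_def c_def
  proof (subst sum.image_gen[of C' hamming_wt hamming_wt])
    show "finite C'" by simp
    show "(\<Sum>y\<in>hamming_wt ` C'. sum hamming_wt {x \<in> C'. hamming_wt x = y}) =
      (\<Sum>w\<in>hamming_wt ` C'. w * card {x \<in> C'. hamming_wt x = w})"
      by (intro sum.cong refl) simp
  qed
  have c_part: "(\<Sum>w\<in>W. c w) = card C'"
    unfolding W_def c_def using sum.image_gen[of C' "\<lambda>_. 1::nat" hamming_wt] by simp
  have cC': "card C' = q ^ k - 1" using NC zC by (simp add: C'_def)
  have cge: "c w \<ge> q - 1" if w: "w \<in> W" for w
  proof -
    obtain x where x: "x \<in> C'" "hamming_wt x = w" using w by (auto simp: W_def)
    have sb: "(\<lambda>a. a *s x) ` (UNIV - {0}) \<subseteq> {x\<in>C'. hamming_wt x = w}"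
      using x sub by (auto simp: C'_def vec.subspace_scale wt_scale)
    have ij: "inj_on (\<lambda>a. a *s x) (UNIV - {0})" using x by (auto simp: inj_on_def C'_def)
    have "card (UNIV - {0::'a}) = card ((\<lambda>a. a *s x) ` (UNIV - {0}))"
      using card_image[OF ij] by simp
    also have "\<dots> \<le> c w" unfolding c_def by (rule card_mono[OF _ sb]) simp
    finally have "card (UNIV - {0::'a}) \<le> c w" .
    then show ?thesis by (simp add: q_def card_Diff_singleton)
  qed
  have ceq: "c w = q - 1" if w: "w \<in> W" for w
  proof (rule ccontr)
    assume "c w \<noteq> q - 1"
    have "(\<Sum>w\<in>W. q - 1) < (\<Sum>w\<in>W. c w)"
    proof (rule sum_strict_mono_ex1)
      show "finite W" by (simp add: W_def)
      show "\<forall>x\<in>W. q - 1 \<le> c x" using cge by blast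
      show "\<exists>a\<in>W. q - 1 < c a" using w cge[OF w] \<open>c w \<noteq> q - 1\<close> by (intro bexI[of _ w]) auto
    qed
    then show False using c_part cC' geo cW by (simp add: mult.commute)
  qed
  have "(\<Sum>w\<in>W. w * c w) = (q - 1) * (\<Sum>W)"
    using ceq by (simp add: sum_distrib_left mult.commute)
  then have "(q - 1) * \<Sum>W = n * (q ^ Suc m * (q - 1))" using s_part sumC' by metis
  also have "\<dots> = (q - 1) * (n * q ^ Suc m)" by (simp only: ac_simps)
  finally have sW: "\<Sum>W = n * q ^ Suc m" using q2 by simp
  have Wn: "\<forall>w\<in>W. w \<le> n"
    unfolding W_def n_def hamming_wt_def by (auto intro: card_mono)
  have inj: "inj_on (\<lambda>w. n - w) W" using Wn unfolding inj_on_def by (metis diff_diff_cancel)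
  have "card ((\<lambda>w. n - w) ` W) * (card ((\<lambda>w. n - w) ` W) - 1) \<le> 2 * \<Sum> ((\<lambda>w. n - w) ` W)"
    by (rule sum_distinct_nat) (simp add: W_def)
  then have ineq: "t * (t - 1) \<le> 2 * (\<Sum>w\<in>W. n - w)"
    using inj cW by (simp add: card_image sum.reindex)
  have "(\<Sum>w\<in>W. n - w) + \<Sum>W = t * n"
    using Wn cW by (simp add: sum.distrib[symmetric])
  then have "(\<Sum>w\<in>W. n - w) = n * s" using sW ts1 by (simp add: algebra_simps)
  then have "s * (q * t) \<le> s * (2 * n)" using ineq ts2 by (simp add: algebra_simps)
  then have key: "q * t \<le> 2 * n" using s1 by simp
  have "real q * real t / 2 \<le> real n" using key by (simp add: field_simps flip: of_nat_mult)
  then have "\<lceil>real q * real t / 2\<rceil> \<le> int n" by (simp add: ceiling_le_iff)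
  then show ?thesis using tth by (simp add: q_def n_def)
qed

end
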